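(* Let $l,r$ be positive integers. For every $n\ge r$, the sequence $k\mapsto L_r^{(l)}(n,k)$ is log-concave, i.e. $L_r^{(l)}(n,k)^2\ge L_r^{(l)}(n,k-1)L_r^{(l)}(n,k+1)$ for all $k$.
   Context: For a set partition $\Pi$ of $[n]=\{1,\dots,n\}$, the block leader set $\mathrm{bl}(\Pi)$ is the set of minimum elements of the blocks of $\Pi$. The $(l,r)$-Lah number $L_r^{(l)}(n,k)$ is the number of $l$-tuples $(\Pi_1,\dots,\Pi_l)$ where each $\Pi_j$ is a partition of $[n]$ into $k$ nonempty blocks each equipped with a linear order, such that $\{1,\dots,r\}\subseteq\mathrm{bl}(\Pi_1)$ and $\mathrm{bl}(\Pi_1)=\mathrm{bl}(\Pi_2)=\cdots=\mathrm{bl}(\Pi_l)$ (and $L_r^{(l)}(n,k)=0$ when no such tuples exist). *)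

theory Defs
  imports Main
begin

text \<open>A partition of [n] into k nonempty blocks, each equipped with a linear order:
  each block is represented by a duplicate-free nonempty list (the list order is the
  linear order on the block); the underlying sets of the lists are pairwise disjoint
  and cover {1..n}.\<close>
definition lah_partitions :: "nat \<Rightarrow> nat \<Rightarrow> nat list set set" where
  "lah_partitions n k = {P. finite P \<and> card P = k
      \<and> (\<forall>xs\<in>P. xs \<noteq> [] \<and> distinct xs)
      \<and> (\<forall>xs\<in>P. \<forall>ys\<in>P. xs \<noteq> ys \<longrightarrow> set xs \<inter> set ys = {})
      \<and> \<Union> (set ` P) = {1..n}}"

definition block_leaders :: "nat list set \<Rightarrow> nat set" where
  "block_leaders P = (\<lambda>xs. Min (set xs)) ` P"

text \<open>(l,r)-Lah number. l-tuples (P_1,...,P_l) are represented as functions on {0..<l}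
  (fixed to {} outside). Value 0 for negative k.\<close>
definition lah_lr :: "nat \<Rightarrow> nat \<Rightarrow> nat \<Rightarrow> int \<Rightarrow> nat" where
  "lah_lr l r n k = (if k < 0 then 0 else
     card {f :: nat \<Rightarrow> nat list set.
        (\<forall>j<l. f j \<in> lah_partitions n (nat k)) \<and> (\<forall>j\<ge>l. f j = {})
        \<and> {1..r} \<subseteq> block_leaders (f 0)
        \<and> (\<forall>j<l. block_leaders (f j) = block_leaders (f 0))})"

end

theory Submission
  imports Defs "HOL-Library.FuncSet" Complex_Main
begin


definition is_lah :: "nat \<Rightarrow> nat list set \<Rightarrow> bool" where
  "is_lah n P \<longleftrightarrow> finite P \<and> (\<forall>xs\<in>P. xs \<noteq> [] \<and> distinct xs)
      \<and> (\<forall>xs\<in>P. \<forall>ys\<in>P. xs \<noteq> ys \<longrightarrow> set xs \<inter> set ys = {})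
      \<and> \<Union> (set ` P) = {1..n}"

definition LS :: "nat \<Rightarrow> nat set \<Rightarrow> nat list set set" where
  "LS n S = {P. is_lah n P \<and> block_leaders P = S}"

lemma lah_partitions_eq: "lah_partitions n k = {P. is_lah n P \<and> card P = k}"
  unfolding lah_partitions_def is_lah_def by auto

lemma inj_min_set: "is_lah n P \<Longrightarrow> inj_on (\<lambda>xs. Min (set xs)) P"
proof (rule inj_onI)
  fix xs ys assume P: "is_lah n P" "xs \<in> P" "ys \<in> P" "Min (set xs) = Min (set ys)"
  have ne: "xs \<noteq> []" "ys \<noteq> []" using P unfolding is_lah_def by auto
  have a: "Min (set xs) \<in> set xs" using ne by simp
  have "Min (set ys) \<in> set ys" using ne by simp
  hence "Min (set xs) \<in> set ys" using P(4) by simp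
  hence "set xs \<inter> set ys \<noteq> {}" using a by blast
  thus "xs = ys" using P unfolding is_lah_def by blast
qed

lemma card_bl: "is_lah n P \<Longrightarrow> card (block_leaders P) = card P"
  unfolding block_leaders_def using inj_min_set card_image by blast

lemma bl_sub: "is_lah n P \<Longrightarrow> block_leaders P \<subseteq> {1..n}"
  unfolding block_leaders_def is_lah_def
proof clarify
  fix xs assume "finite P" "\<forall>xs\<in>P. xs \<noteq> [] \<and> distinct xs" "\<Union> (set ` P) = {1..n}" "xs \<in> P"
  thus "Min (set xs) \<in> {1..n}" by (metis Min_in List.finite_set UN_I set_empty)
qed

lemma finite_lah: "finite {P. is_lah n P}"
proof -
  have "{P. is_lah n P} \<subseteq> Pow {xs. set xs \<subseteq> {1..n} \<and> distinct xs}"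
    unfolding is_lah_def by auto
  moreover have "finite (Pow {xs. set xs \<subseteq> {1..n} \<and> distinct xs})"
    using finite_subset_distinct[of "{1..n}"] by simp
  ultimately show ?thesis by (rule finite_subset)
qed

lemma finite_LS: "finite (LS n S)"
proof -
  have "LS n S \<subseteq> {P. is_lah n P}" unfolding LS_def by blast
  thus ?thesis using finite_lah by (rule finite_subset)
qed

lemma lah_lr_sum:
  assumes l1: "l \<ge> 1" and k0: "k \<ge> 0"
  shows "lah_lr l r n k = (\<Sum>S\<in>{S. S \<subseteq> {1..n} \<and> {1..r} \<subseteq> S \<and> card S = nat k}. card (LS n S) ^ l)"
proof -
  define I where "I = {S. S \<subseteq> {1..n} \<and> {1..r} \<subseteq> S \<and> card S = nat k}"
  define G where "G S = {f :: nat \<Rightarrow> nat list set. (\<forall>j<l. f j \<in> LS n S) \<and> (\<forall>j\<ge>l. f j = {})}" for S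
  define F where "F = {f :: nat \<Rightarrow> nat list set.
        (\<forall>j<l. f j \<in> lah_partitions n (nat k)) \<and> (\<forall>j\<ge>l. f j = {})
        \<and> {1..r} \<subseteq> block_leaders (f 0)
        \<and> (\<forall>j<l. block_leaders (f j) = block_leaders (f 0))}"
  have l0: "0 < l" using l1 by simp
  have FU: "F = (\<Union>S\<in>I. G S)"
  proof
    show "F \<subseteq> (\<Union>S\<in>I. G S)"
    proof
      fix f assume f: "f \<in> F"
      let ?S = "block_leaders (f 0)"
      have f0: "is_lah n (f 0)" "card (f 0) = nat k" using f l0 unfolding F_def lah_partitions_eq by auto
      have "?S \<in> I" using f0 f bl_sub[OF f0(1)] card_bl[OF f0(1)] unfolding I_def F_def by auto
      moreover have "f \<in> G ?S" unfolding G_def LS_def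
      proof (intro CollectI conjI allI impI)
        fix j assume "j < l"
        have "f \<in> F" by (rule f)
        hence A: "\<forall>j<l. f j \<in> lah_partitions n (nat k)" and B: "\<forall>j<l. block_leaders (f j) = block_leaders (f 0)"
          unfolding F_def by blast+
        show "is_lah n (f j)" using A \<open>j < l\<close> unfolding lah_partitions_eq by blast
        show "block_leaders (f j) = ?S" using B \<open>j < l\<close> by blast
      next
        fix j assume "l \<le> j" then show "f j = {}" using f unfolding F_def by simp
      qed
      ultimately show "f \<in> (\<Union>S\<in>I. G S)" by blast
    qed
  next
    show "(\<Union>S\<in>I. G S) \<subseteq> F"
    proof
      fix f assume "f \<in> (\<Union>S\<in>I. G S)"
      then obtain S where S: "S \<in> I" "f \<in> G S" by blast
      have fj: "\<And>j. j < l \<Longrightarrow> is_lah n (f j) \<and> block_leaders (f j) = S" using S unfolding G_def LS_def by auto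
      have cS: "card S = nat k" using S(1) unfolding I_def by simp
      have r0: "{1..r} \<subseteq> S" using S(1) unfolding I_def by simp
      have ck: "card (f j) = nat k" if "j < l" for j
        using fj[OF that] card_bl[of n "f j"] cS by simp
      have fl: "f j = {}" if "l \<le> j" for j using S(2) that unfolding G_def by simp
      show "f \<in> F" unfolding F_def lah_partitions_eq
      proof (intro CollectI conjI allI impI)
        fix j assume j: "j < l"
        show "is_lah n (f j)" using fj[OF j] by simp
        show "card (f j) = nat k" using ck[OF j] .
        show "block_leaders (f j) = block_leaders (f 0)" using fj[OF j] fj[OF l0] by simp
      next
        fix j assume "l \<le> j" then show "f j = {}" by (rule fl)
      next
        show "{1..r} \<subseteq> block_leaders (f 0)" using fj[OF l0] r0 by simp
      qed
    qed
  qed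
  have cardG: "card (G S) = card (LS n S) ^ l" for S
  proof -
    define ext where "ext g = (\<lambda>j. if j < l then g j else ({} :: nat list set))" for g :: "nat \<Rightarrow> nat list set"
    have "G S = ext ` (PiE {..<l} (\<lambda>_. LS n S))"
    proof
      show "G S \<subseteq> ext ` (PiE {..<l} (\<lambda>_. LS n S))"
      proof
        fix f assume f: "f \<in> G S"
        have "restrict f {..<l} \<in> PiE {..<l} (\<lambda>_. LS n S)" using f unfolding G_def by auto
        moreover have "ext (restrict f {..<l}) = f"
        proof
          fix j show "ext (restrict f {..<l}) j = f j" using f unfolding G_def ext_def
            by (cases "j < l") auto
        qed
        ultimately show "f \<in> ext ` (PiE {..<l} (\<lambda>_. LS n S))" by (metis image_eqI)
      qed
    next
      show "ext ` (PiE {..<l} (\<lambda>_. LS n S)) \<subseteq> G S"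
      proof
        fix f assume "f \<in> ext ` (PiE {..<l} (\<lambda>_. LS n S))"
        then obtain g where g: "g \<in> PiE {..<l} (\<lambda>_. LS n S)" "f = ext g" by blast
        show "f \<in> G S" unfolding G_def g(2) ext_def
          using g(1) by (simp add: PiE_iff)
      qed
    qed
    moreover have "inj_on ext (PiE {..<l} (\<lambda>_. LS n S))"
    proof (rule inj_onI)
      fix g h assume gh: "g \<in> PiE {..<l} (\<lambda>_. LS n S)" "h \<in> PiE {..<l} (\<lambda>_. LS n S)" "ext g = ext h"
      show "g = h"
      proof
        fix j show "g j = h j"
          using gh fun_cong[OF gh(3), of j] unfolding ext_def
          by (cases "j < l") (auto simp: PiE_iff extensional_def)
      qed
    qed
    ultimately have "card (G S) = card (PiE {..<l} (\<lambda>_. LS n S))" by (simp add: card_image)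
    also have "\<dots> = card (LS n S) ^ l" by (simp add: card_PiE)
    finally show ?thesis .
  qed
  have finI: "finite I" unfolding I_def by (rule finite_subset[of _ "Pow {1..n}"]) auto
  have finG: "finite (G S)" for S
  proof (cases "card (G S) = 0")
    case True
    hence "card (LS n S) ^ l = 0" using cardG by simp
    hence "LS n S = {}" using finite_LS[of n S] l0 by simp
    hence "G S = {}" using l0 unfolding G_def by auto
    thus ?thesis by simp
  qed (simp add: card_ge_0_finite)
  have "lah_lr l r n k = card F" unfolding lah_lr_def F_def using k0 by simp
  also have "\<dots> = (\<Sum>S\<in>I. card (G S))" unfolding FU
  proof (rule card_UN_disjoint[OF finI])
    show "\<forall>S\<in>I. finite (G S)" using finG by blast
    show "\<forall>S\<in>I. \<forall>S'\<in>I. S \<noteq> S' \<longrightarrow> G S \<inter> G S' = {}"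
    proof (intro ballI impI)
      fix S S' :: "nat set" assume "S \<noteq> S'"
      show "G S \<inter> G S' = {}"
      proof (rule ccontr)
        assume "G S \<inter> G S' \<noteq> {}"
        then obtain f where "f \<in> G S" "f \<in> G S'" by blast
        hence "f 0 \<in> LS n S" "f 0 \<in> LS n S'" using l0 unfolding G_def by auto
        hence "S = S'" unfolding LS_def by simp
        thus False using \<open>S \<noteq> S'\<close> by simp
      qed
    qed
  qed
  also have "\<dots> = (\<Sum>S\<in>I. card (LS n S) ^ l)" using cardG by simp
  finally show ?thesis unfolding I_def .
qed



lemma lah_blocks_sub: "is_lah m Q \<Longrightarrow> xs \<in> Q \<Longrightarrow> set xs \<subseteq> {1..m}"
  unfolding is_lah_def by blast

lemma Min_insert_big:
  fixes A :: "nat set"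
  assumes "finite A" "A \<noteq> {}" "\<forall>a\<in>A. a \<le> n"
  shows "Min (insert n A) = Min A"
proof -
  have "Min A \<le> n" using assms Min_in by blast
  thus ?thesis using Min_insert[OF assms(1,2), of n] by (simp add: min_absorb2)
qed

lemma bl_insert: "block_leaders (insert xs P) = insert (Min (set xs)) (block_leaders P)"
  unfolding block_leaders_def by simp

lemma LS_zero: "LS 0 {} = {{}}"
proof
  show "LS 0 {} \<subseteq> {{}}"
  proof
    fix P assume "P \<in> LS 0 {}"
    hence "block_leaders P = {}" unfolding LS_def by simp
    hence "P = {}" unfolding block_leaders_def by simp
    thus "P \<in> {{}}" by simp
  qed
  show "{{}} \<subseteq> LS 0 {}" unfolding LS_def is_lah_def block_leaders_def by simp
qed

lemma W_leader:
  assumes n1: "n \<ge> 1" and nS: "n \<in> S"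
  shows "card (LS n S) = card (LS (n-1) (S - {n}))"
proof -
  have nb: "[n] \<notin> P" if "P \<in> LS (n-1) (S - {n})" for P
  proof
    assume "[n] \<in> P"
    moreover have "is_lah (n-1) P" using that unfolding LS_def by simp
    ultimately have "set [n] \<subseteq> {1..n-1}" using lah_blocks_sub by blast
    thus False using n1 by simp
  qed
  have "bij_betw (insert [n]) (LS (n-1) (S - {n})) (LS n S)"
  proof (rule bij_betw_imageI)
    show "inj_on (insert [n]) (LS (n-1) (S - {n}))"
    proof (rule inj_onI)
      fix P Q assume PQ: "P \<in> LS (n-1) (S - {n})" "Q \<in> LS (n-1) (S - {n})" "insert [n] P = insert [n] Q"
      have "P = insert [n] P - {[n]}" using nb[OF PQ(1)] by simp
      also have "\<dots> = insert [n] Q - {[n]}" using PQ(3) by simp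
      also have "\<dots> = Q" using nb[OF PQ(2)] by simp
      finally show "P = Q" .
    qed
  next
    show "insert [n] ` LS (n-1) (S - {n}) = LS n S"
    proof
      show "insert [n] ` LS (n-1) (S - {n}) \<subseteq> LS n S"
      proof clarify
        fix P assume P: "P \<in> LS (n-1) (S - {n})"
        have lP: "is_lah (n-1) P" and bP: "block_leaders P = S - {n}" using P unfolding LS_def by auto
        have "\<Union> (set ` P) = {1..n-1}" using lP unfolding is_lah_def by blast
        hence nU: "n \<notin> \<Union> (set ` P)" using n1 by simp
        have "is_lah n (insert [n] P)" unfolding is_lah_def
        proof (intro conjI)
          show "finite (insert [n] P)" using lP unfolding is_lah_def by simp
          show "\<forall>xs\<in>insert [n] P. xs \<noteq> [] \<and> distinct xs" using lP unfolding is_lah_def by simp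
          have dP: "\<forall>xs\<in>P. \<forall>ys\<in>P. xs \<noteq> ys \<longrightarrow> set xs \<inter> set ys = {}"
            using lP unfolding is_lah_def by blast
          have nys: "n \<notin> set ys" if "ys \<in> P" for ys using nU that by blast
          show "\<forall>xs\<in>insert [n] P. \<forall>ys\<in>insert [n] P. xs \<noteq> ys \<longrightarrow> set xs \<inter> set ys = {}"
          proof (intro ballI impI)
            fix xs ys assume a: "xs \<in> insert [n] P" "ys \<in> insert [n] P" "xs \<noteq> ys"
            show "set xs \<inter> set ys = {}"
            proof (cases "xs = [n]")
              case True
              hence "ys \<in> P" using a by simp
              thus ?thesis using True nys by simp
            next
              case False
              hence xP: "xs \<in> P" using a by simp
              show ?thesis
              proof (cases "ys = [n]")
                case True
                thus ?thesis using xP nys by simp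
              next
                case False
                thus ?thesis using xP a dP by simp
              qed
            qed
          qed
          have "\<Union> (set ` P) = {1..n-1}" using lP unfolding is_lah_def by blast
          moreover have "insert n {1..n-1} = {1..n}" using n1 by auto
          ultimately show "\<Union> (set ` insert [n] P) = {1..n}" by simp
        qed
        moreover have "block_leaders (insert [n] P) = S" using bP nS by (simp add: bl_insert insert_absorb)
        ultimately show "insert [n] P \<in> LS n S" unfolding LS_def by simp
      qed
    next
      show "LS n S \<subseteq> insert [n] ` LS (n-1) (S - {n})"
      proof
        fix P assume P: "P \<in> LS n S"
        have lP: "is_lah n P" and bP: "block_leaders P = S" using P unfolding LS_def by auto
        obtain ys where ys: "ys \<in> P" "Min (set ys) = n" using bP nS unfolding block_leaders_def by auto
        have ysne: "ys \<noteq> []" "distinct ys" using lP ys unfolding is_lah_def by auto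
        have "set ys \<subseteq> {1..n}" using lah_blocks_sub[OF lP ys(1)] .
        hence all: "\<forall>a\<in>set ys. a = n"
        proof (intro ballI)
          fix a assume "set ys \<subseteq> {1..n}" "a \<in> set ys"
          hence "Min (set ys) \<le> a" by simp
          moreover have "a \<le> n" using \<open>set ys \<subseteq> {1..n}\<close> \<open>a \<in> set ys\<close> by (meson atLeastAtMost_iff subsetD)
          ultimately have "Min (set ys) \<le> a" "a \<le> n" by simp_all
          thus "a = n" using ys(2) by simp
        qed
        hence sy: "set ys = {n}" using ysne(1) by (cases ys) auto
        have "length ys = 1" using distinct_card[OF ysne(2)] sy by simp
        then obtain x where "ys = [x]" by (cases ys) auto
        hence yn: "ys = [n]" using sy by simp
        define Q where "Q = P - {[n]}"
        have PQ: "P = insert [n] Q" using ys yn Q_def by auto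
        have nQ: "[n] \<notin> Q" using Q_def by simp
        have "is_lah (n-1) Q" unfolding is_lah_def
        proof (intro conjI)
          show "finite Q" using lP unfolding is_lah_def Q_def by simp
          show "\<forall>xs\<in>Q. xs \<noteq> [] \<and> distinct xs" using lP unfolding is_lah_def Q_def by simp
          show "\<forall>xs\<in>Q. \<forall>zs\<in>Q. xs \<noteq> zs \<longrightarrow> set xs \<inter> set zs = {}" using lP unfolding is_lah_def Q_def by simp
          have U: "\<Union> (set ` P) = {1..n}" using lP unfolding is_lah_def by simp
          have dis: "\<forall>xs\<in>Q. n \<notin> set xs"
          proof
            fix xs assume "xs \<in> Q"
            hence "xs \<in> P" "xs \<noteq> ys" using Q_def yn by auto
            hence "set xs \<inter> set ys = {}" using lP ys(1) unfolding is_lah_def by blast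
            thus "n \<notin> set xs" using yn by auto
          qed
          have "\<Union> (set ` P) = insert n (\<Union> (set ` Q))" using PQ by simp
          hence "insert n (\<Union> (set ` Q)) = {1..n}" using U by simp
          moreover have "n \<notin> \<Union> (set ` Q)" using dis by blast
          ultimately have "\<Union> (set ` Q) = {1..n} - {n}" by blast
          moreover have "{1..n} - {n} = {1..n-1}" using n1 by auto
          ultimately show "\<Union> (set ` Q) = {1..n-1}" by simp
        qed
        moreover have "block_leaders Q = S - {n}"
        proof -
          have "block_leaders Q = block_leaders P - {n}"
            using inj_min_set[OF lP] ys yn unfolding block_leaders_def Q_def
            by (simp add: inj_on_image_set_diff[of _ P] ys)
          thus ?thesis using bP by simp
        qed
        ultimately have "Q \<in> LS (n-1) (S - {n})" unfolding LS_def by simp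
        thus "P \<in> insert [n] ` LS (n-1) (S - {n})" using PQ by blast
      qed
    qed
  qed
  thus ?thesis by (simp add: bij_betw_same_card)
qed



lemma lahD:
  assumes "is_lah n P"
  shows "finite P" "\<And>xs. xs \<in> P \<Longrightarrow> xs \<noteq> []" "\<And>xs. xs \<in> P \<Longrightarrow> distinct xs"
    "\<And>xs ys. xs \<in> P \<Longrightarrow> ys \<in> P \<Longrightarrow> xs \<noteq> ys \<Longrightarrow> set xs \<inter> set ys = {}"
    "\<Union> (set ` P) = {1..n}"
  using assms unfolding is_lah_def by blast+

lemma lahI:
  assumes "finite P" "\<And>xs. xs \<in> P \<Longrightarrow> xs \<noteq> [] \<and> distinct xs"
    "\<And>xs ys. xs \<in> P \<Longrightarrow> ys \<in> P \<Longrightarrow> xs \<noteq> ys \<Longrightarrow> set xs \<inter> set ys = {}"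
    "\<Union> (set ` P) = {1..n}"
  shows "is_lah n P"
  using assms unfolding is_lah_def by blast

definition ins :: "nat \<Rightarrow> nat \<Rightarrow> nat list \<Rightarrow> nat list" where
  "ins n i xs = take i xs @ n # drop i xs"

lemma set_ins: "set (ins n i xs) = insert n (set xs)"
proof -
  have "set xs = set (take i xs @ drop i xs)" by simp
  also have "\<dots> = set (take i xs) \<union> set (drop i xs)" by (rule set_append)
  finally show ?thesis unfolding ins_def by auto
qed

lemma distinct_ins: "distinct xs \<Longrightarrow> n \<notin> set xs \<Longrightarrow> distinct (ins n i xs)"
proof -
  assume d: "distinct xs" and n: "n \<notin> set xs"
  have "distinct (take i xs @ drop i xs)" using d by simp
  moreover have "n \<notin> set (take i xs)" "n \<notin> set (drop i xs)" using n in_set_takeD in_set_dropD by metis+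
  ultimately show ?thesis unfolding ins_def by (simp del: append_take_drop_id)
qed

lemma ins_inj:
  assumes "n \<notin> set xs" "n \<notin> set ys" "i \<le> length xs" "j \<le> length ys" "ins n i xs = ins n j ys"
  shows "i = j \<and> xs = ys"
proof -
  have a: "n \<notin> set (take i xs)" "n \<notin> set (drop i xs)" using assms(1) in_set_takeD in_set_dropD by metis+
  have e: "take i xs @ n # drop i xs = take j ys @ n # drop j ys" using assms(5) unfolding ins_def .
  have "take i xs = take j ys \<and> drop i xs = drop j ys"
    using append_Cons_eq_iff[OF a, of "take j ys" "drop j ys"] e by blast
  moreover hence "i = j" using assms(3,4) by (metis length_take min_absorb2)
  ultimately show ?thesis by (metis append_take_drop_id)
qed

lemma ins_surj:
  assumes "n \<in> set ys" "distinct ys"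
  obtains i xs where "i \<le> length xs" "n \<notin> set xs" "ys = ins n i xs" "distinct xs"
proof -
  obtain i where i: "i < length ys" "ys ! i = n" using assms(1) by (metis in_set_conv_nth)
  define xs where "xs = take i ys @ drop (Suc i) ys"
  have ys: "ys = take i ys @ n # drop (Suc i) ys" using id_take_nth_drop[OF i(1)] i(2) by simp
  have lx: "length xs = length ys - 1" unfolding xs_def using i by simp
  have "take i xs = take i ys" unfolding xs_def using i by simp
  moreover have "drop i xs = drop (Suc i) ys" unfolding xs_def using i by simp
  ultimately have e: "ys = ins n i xs" unfolding ins_def using ys by simp
  have dd: "distinct (take i ys @ n # drop (Suc i) ys)" using assms(2) ys by simp
  hence "n \<notin> set xs" "distinct xs" unfolding xs_def by auto
  moreover have "i \<le> length xs" using lx i by simp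
  ultimately show ?thesis using that e by blast
qed

lemma Phi_in:
  assumes n1: "n \<ge> 1" and Q: "Q \<in> LS (n-1) S" and xs: "xs \<in> Q"
  shows "insert (ins n i xs) (Q - {xs}) \<in> LS n S"
proof -
  have lQ: "is_lah (n-1) Q" and bQ: "block_leaders Q = S" using Q unfolding LS_def by auto
  note D = lahD[OF lQ]
  have nQ: "n \<notin> set zs" if "zs \<in> Q" for zs
  proof
    assume "n \<in> set zs"
    hence "n \<in> {1..n-1}" using D(5) that by blast
    thus False using n1 by simp
  qed
  define ys where "ys = ins n i xs"
  have sys: "set ys = insert n (set xs)" unfolding ys_def by (rule set_ins)
  have dys: "distinct ys" unfolding ys_def using distinct_ins D(3)[OF xs] nQ[OF xs] by blast
  have "is_lah n (insert ys (Q - {xs}))"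
  proof (rule lahI)
    show "finite (insert ys (Q - {xs}))" using D(1) by simp
    show "zs \<noteq> [] \<and> distinct zs" if "zs \<in> insert ys (Q - {xs})" for zs
      using that D(2,3) dys sys by auto
    show "set zs \<inter> set zs' = {}" if "zs \<in> insert ys (Q - {xs})" "zs' \<in> insert ys (Q - {xs})" "zs \<noteq> zs'" for zs zs'
    proof -
      have g: "set ys \<inter> set z = {}" if "z \<in> Q - {xs}" for z
      proof -
        have "z \<in> Q" "z \<noteq> xs" using that by auto
        hence "set xs \<inter> set z = {}" "n \<notin> set z" using D(4)[OF xs] nQ by auto
        thus ?thesis using sys by auto
      qed
      show ?thesis
      proof (cases "zs = ys")
        case True
        hence "zs' \<in> Q - {xs}" using that by auto
        thus ?thesis using g True by simp
      next
        case False
        hence z1: "zs \<in> Q - {xs}" using that by auto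
        show ?thesis
        proof (cases "zs' = ys")
          case True
          thus ?thesis using g[OF z1] by auto
        next
          case False
          hence "zs' \<in> Q - {xs}" using that by auto
          thus ?thesis using z1 D(4) that(3) by auto
        qed
      qed
    qed
    have "\<Union> (set ` insert ys (Q - {xs})) = insert n (set xs \<union> \<Union> (set ` (Q - {xs})))" using sys by auto
    also have "set xs \<union> \<Union> (set ` (Q - {xs})) = \<Union> (set ` Q)" using xs by blast
    also have "\<dots> = {1..n-1}" by (rule D(5))
    also have "insert n {1..n-1} = {1..n}" using n1 by auto
    finally show "\<Union> (set ` insert ys (Q - {xs})) = {1..n}" .
  qed
  moreover have "block_leaders (insert ys (Q - {xs})) = S"
  proof -
    have sx: "set xs \<noteq> {}" using D(2)[OF xs] by simp
    have le: "\<forall>a\<in>set xs. a \<le> n"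
    proof
      fix a assume "a \<in> set xs"
      hence "a \<in> {1..n-1}" using D(5) xs by blast
      thus "a \<le> n" by (simp add: le_diff_conv2 del: One_nat_def) linarith
    qed
    have "Min (set ys) = Min (set xs)" unfolding sys using Min_insert_big[OF _ sx le] by simp
    hence "block_leaders (insert ys (Q - {xs})) = block_leaders (insert xs (Q - {xs}))"
      by (simp only: bl_insert)
    also have "insert xs (Q - {xs}) = Q" using xs by blast
    finally show ?thesis using bQ by simp
  qed
  ultimately show ?thesis unfolding LS_def ys_def by simp
qed

lemma sum_len:
  assumes Q: "Q \<in> LS m S"
  shows "(\<Sum>xs\<in>Q. card {..length xs}) = m + card S"
proof -
  have lQ: "is_lah m Q" and bQ: "block_leaders Q = S" using Q unfolding LS_def by auto
  note D = lahD[OF lQ]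
  have "(\<Sum>xs\<in>Q. card {..length xs}) = (\<Sum>xs\<in>Q. card (set xs) + 1)"
    using D(3) by (intro sum.cong) (simp_all add: distinct_card)
  also have "\<dots> = (\<Sum>xs\<in>Q. card (set xs)) + card Q" unfolding sum.distrib by simp
  also have "(\<Sum>xs\<in>Q. card (set xs)) = card (\<Union> (set ` Q))"
    by (rule card_UN_disjoint[symmetric]) (use D(1,4) in auto)
  also have "\<dots> = m" using D(5) by simp
  also have "card Q = card S" using card_bl[OF lQ] bQ by simp
  finally show ?thesis .
qed

lemma W_nonleader:
  assumes n1: "n \<ge> 1" and nS: "n \<notin> S"
  shows "card (LS n S) = (n - 1 + card S) * card (LS (n-1) S)"
proof -
  define D where "D = Sigma (LS (n-1) S) (\<lambda>Q. Sigma Q (\<lambda>xs. {..length xs}))"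
  define Phi where "Phi = (\<lambda>(Q, xs, i). insert (ins n i xs) (Q - {xs}))"
  have nQ: "n \<notin> set zs" if "Q \<in> LS (n-1) S" "zs \<in> Q" for Q zs
  proof
    assume "n \<in> set zs"
    hence "n \<in> {1..n-1}" using lahD(5)[of "n-1" Q] that unfolding LS_def by blast
    thus False using n1 by simp
  qed
  have into: "Phi ` D \<subseteq> LS n S"
  proof
    fix P assume "P \<in> Phi ` D"
    then obtain Q xs i where "(Q, xs, i) \<in> D" "P = Phi (Q, xs, i)" by auto
    thus "P \<in> LS n S" unfolding D_def Phi_def using Phi_in[OF n1] by auto
  qed
  have onto: "LS n S \<subseteq> Phi ` D"
  proof
    fix P assume P: "P \<in> LS n S"
    have lP: "is_lah n P" and bP: "block_leaders P = S" using P unfolding LS_def by auto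
    note DP = lahD[OF lP]
    have "n \<in> \<Union> (set ` P)" using DP(5) n1 by simp
    then obtain ys where ys: "ys \<in> P" "n \<in> set ys" by blast
    obtain i xs where ix: "i \<le> length xs" "n \<notin> set xs" "ys = ins n i xs" "distinct xs"
      using ins_surj[OF ys(2) DP(3)[OF ys(1)]] by blast
    have sys: "set ys = insert n (set xs)" using ix(3) set_ins by simp
    have xne: "xs \<noteq> []"
    proof
      assume "xs = []"
      hence "ys = [n]" using ix unfolding ins_def by simp
      hence "n \<in> block_leaders P" using ys(1) unfolding block_leaders_def by force
      thus False using bP nS by simp
    qed
    have disy: "set ys \<inter> set z = {}" if "z \<in> P - {ys}" for z using DP(4) ys(1) that by blast
    have xnP: "xs \<notin> P - {ys}"
    proof
      assume "xs \<in> P - {ys}"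
      hence "set ys \<inter> set xs = {}" using disy by blast
      moreover have "set xs \<noteq> {}" using xne by simp
      moreover have "set xs \<subseteq> set ys" unfolding sys by (rule subset_insertI)
      ultimately show False by (metis inf.absorb_iff2 inf_commute)
    qed
    define Q where "Q = insert xs (P - {ys})"
    have "is_lah (n-1) Q"
    proof (rule lahI)
      show "finite Q" using DP(1) Q_def by simp
      show "zs \<noteq> [] \<and> distinct zs" if "zs \<in> Q" for zs
        using that DP(2,3) xne ix(4) unfolding Q_def by auto
      show "set zs \<inter> set zs' = {}" if "zs \<in> Q" "zs' \<in> Q" "zs \<noteq> zs'" for zs zs'
      proof -
        have g: "set xs \<inter> set z = {}" if "z \<in> P - {ys}" for z using disy[OF that] sys by blast
        show ?thesis
        proof (cases "zs = xs")
          case True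
          hence "zs' \<in> P - {ys}" using that unfolding Q_def by auto
          thus ?thesis using g True by simp
        next
          case False
          hence z1: "zs \<in> P - {ys}" using that unfolding Q_def by auto
          show ?thesis
          proof (cases "zs' = xs")
            case True
            thus ?thesis using g[OF z1] by auto
          next
            case False
            hence "zs' \<in> P - {ys}" using that unfolding Q_def by auto
            thus ?thesis using z1 DP(4) that(3) by auto
          qed
        qed
      qed
      have nR: "n \<notin> \<Union> (set ` (P - {ys}))" using disy ys(2) by blast
      have "set ys \<union> \<Union> (set ` (P - {ys})) = {1..n}" using DP(5) ys(1) by blast
      hence "insert n (set xs \<union> \<Union> (set ` (P - {ys}))) = {1..n}" using sys by simp
      moreover have "n \<notin> set xs \<union> \<Union> (set ` (P - {ys}))" using nR ix(2) by simp
      ultimately have "set xs \<union> \<Union> (set ` (P - {ys})) = {1..n} - {n}" by blast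
      also have "{1..n} - {n} = {1..n-1}" using n1 by auto
      finally show "\<Union> (set ` Q) = {1..n-1}" unfolding Q_def by simp
    qed
    moreover have "block_leaders Q = S"
    proof -
      have sx: "set xs \<noteq> {}" using xne by simp
      have le: "\<forall>a\<in>set xs. a \<le> n"
      proof
        fix a assume "a \<in> set xs"
        hence "a \<in> {1..n}" using DP(5) ys(1) sys by blast
        thus "a \<le> n" by simp
      qed
      have "Min (set ys) = Min (set xs)" unfolding sys using Min_insert_big[OF _ sx le] by simp
      hence "block_leaders Q = block_leaders (insert ys (P - {ys}))" unfolding Q_def
        by (simp only: bl_insert)
      also have "insert ys (P - {ys}) = P" using ys(1) by blast
      finally show ?thesis using bP by simp
    qed
    ultimately have QL: "Q \<in> LS (n-1) S" unfolding LS_def by simp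
    have "(Q, xs, i) \<in> D" unfolding D_def using QL ix(1) Q_def by simp
    moreover have "Phi (Q, xs, i) = P"
    proof -
      have "Q - {xs} = P - {ys}" unfolding Q_def using xnP by blast
      hence "Phi (Q, xs, i) = insert ys (P - {ys})" unfolding Phi_def using ix(3) by simp
      also have "\<dots> = P" using ys(1) by blast
      finally show ?thesis .
    qed
    ultimately show "P \<in> Phi ` D" by force
  qed
  have inj: "inj_on Phi D"
  proof (rule inj_onI)
    fix a b assume a: "a \<in> D" and b: "b \<in> D" and e: "Phi a = Phi b"
    obtain Q1 x1 i1 where a1: "a = (Q1, x1, i1)" by (cases a) auto
    obtain Q2 x2 i2 where b1: "b = (Q2, x2, i2)" by (cases b) auto
    have Q1: "Q1 \<in> LS (n-1) S" "x1 \<in> Q1" "i1 \<le> length x1" using a a1 unfolding D_def by auto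
    have Q2: "Q2 \<in> LS (n-1) S" "x2 \<in> Q2" "i2 \<le> length x2" using b b1 unfolding D_def by auto
    define y1 where "y1 = ins n i1 x1"
    define y2 where "y2 = ins n i2 x2"
    have ny1: "n \<in> set y1" "n \<in> set y2" unfolding y1_def y2_def by (simp_all add: set_ins)
    have E: "insert y1 (Q1 - {x1}) = insert y2 (Q2 - {x2})"
      using e unfolding a1 b1 Phi_def y1_def y2_def by simp
    have "y2 \<in> insert y1 (Q1 - {x1})" using E by blast
    moreover have "y2 \<notin> Q1 - {x1}" using nQ[OF Q1(1)] ny1(2) by blast
    ultimately have yy: "y1 = y2" by blast
    have "i1 = i2 \<and> x1 = x2"
      using ins_inj[OF nQ[OF Q1(1,2)] nQ[OF Q2(1,2)] Q1(3) Q2(3)] yy unfolding y1_def y2_def by blast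
    moreover have "Q1 - {x1} = Q2 - {x2}"
    proof -
      have h1: "y1 \<notin> Q1 - {x1}" using nQ[OF Q1(1)] ny1(1) by blast
      have h2: "y2 \<notin> Q2 - {x2}" using nQ[OF Q2(1)] ny1(2) by blast
      have "Q1 - {x1} = insert y1 (Q1 - {x1}) - {y1}" using h1 by simp
      also have "\<dots> = insert y2 (Q2 - {x2}) - {y2}" using E yy by simp
      also have "\<dots> = Q2 - {x2}" using h2 by simp
      finally show ?thesis .
    qed
    ultimately have "Q1 = Q2" using insert_Diff[OF Q1(2)] insert_Diff[OF Q2(2)] by metis
    thus "a = b" using a1 b1 \<open>i1 = i2 \<and> x1 = x2\<close> by simp
  qed
  have "Phi ` D = LS n S" using into onto by blast
  hence "card (LS n S) = card D" using card_image[OF inj] by simp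
  also have "\<dots> = (\<Sum>Q\<in>LS (n-1) S. \<Sum>xs\<in>Q. card {..length xs})"
  proof -
    have fin: "finite Q" if "Q \<in> LS (n-1) S" for Q using that lahD(1) unfolding LS_def by blast
    show ?thesis unfolding D_def using finite_LS fin by (simp add: card_SigmaI)
  qed
  also have "\<dots> = (\<Sum>Q\<in>LS (n-1) S. n - 1 + card S)" using sum_len by (intro sum.cong) auto
  also have "\<dots> = (n - 1 + card S) * card (LS (n-1) S)" by simp
  finally show ?thesis .
qed



definition Iset :: "nat \<Rightarrow> nat \<Rightarrow> nat \<Rightarrow> nat set set" where
  "Iset r n k = {S. S \<subseteq> {1..n} \<and> {1..r} \<subseteq> S \<and> card S = k}"

definition Tn :: "nat \<Rightarrow> nat \<Rightarrow> nat \<Rightarrow> nat \<Rightarrow> nat" where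
  "Tn l r n k = (\<Sum>S\<in>Iset r n k. card (LS n S) ^ l)"

lemma finite_Iset: "finite (Iset r n k)"
  unfolding Iset_def by (rule finite_subset[of _ "Pow {1..n}"]) auto

lemma W_full: "card (LS m {1..m}) = 1"
proof (induction m)
  case 0
  then show ?case using LS_zero by simp
next
  case (Suc m)
  have "card (LS (Suc m) {1..Suc m}) = card (LS m ({1..Suc m} - {Suc m}))"
    using W_leader[of "Suc m" "{1..Suc m}"] by simp
  also have "{1..Suc m} - {Suc m} = {1..m}" by auto
  finally show ?case using Suc.IH by simp
qed

lemma Tn_base: "Tn l r r k = (if k = r then 1 else 0)"
proof -
  have "Iset r r k = (if k = r then {{1..r}} else {})"
    unfolding Iset_def by auto
  thus ?thesis unfolding Tn_def using W_full[of r] by simp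
qed

lemma Tn_zero: "r \<ge> 1 \<Longrightarrow> n \<ge> r \<Longrightarrow> Tn l r n 0 = 0"
proof -
  assume r1: "r \<ge> 1" "n \<ge> r"
  have "Iset r n 0 = {}"
  proof (rule ccontr)
    assume "Iset r n 0 \<noteq> {}"
    then obtain S where S: "S \<subseteq> {1..n}" "{1..r} \<subseteq> S" "card S = 0" unfolding Iset_def by auto
    have "finite S" using S(1) finite_subset by blast
    hence "S = {}" using S(3) by simp
    thus False using S(2) r1 by auto
  qed
  thus ?thesis unfolding Tn_def by simp
qed

lemma Tn_rec:
  assumes nr: "n > r" and k1: "k \<ge> 1"
  shows "Tn l r n k = Tn l r (n-1) (k-1) + (n - 1 + k)^l * Tn l r (n-1) k"
proof -
  have n1: "n \<ge> 1" using nr by simp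
  define A where "A = {S \<in> Iset r n k. n \<in> S}"
  define B where "B = {S \<in> Iset r n k. n \<notin> S}"
  have AB: "Iset r n k = A \<union> B" "A \<inter> B = {}" unfolding A_def B_def by auto
  have finAB: "finite A" "finite B" using finite_Iset[of r n k] unfolding A_def B_def by auto
  have sumsplit: "Tn l r n k = (\<Sum>S\<in>A. card (LS n S) ^ l) + (\<Sum>S\<in>B. card (LS n S) ^ l)"
    unfolding Tn_def AB(1) by (rule sum.union_disjoint[OF finAB AB(2)])
  have sub: "{1..n} - {n} = {1..n-1}" using n1 by auto
  have Beq: "B = Iset r (n-1) k"
  proof
    show "B \<subseteq> Iset r (n-1) k" unfolding B_def Iset_def using sub by blast
    have "{1..n-1} \<subseteq> {1..n}" by auto
    moreover have "n \<notin> {1..n-1}" using n1 by auto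
    ultimately show "Iset r (n-1) k \<subseteq> B" unfolding B_def Iset_def by blast
  qed
  have Bsum: "(\<Sum>S\<in>B. card (LS n S) ^ l) = (n - 1 + k)^l * Tn l r (n-1) k"
  proof -
    have "(\<Sum>S\<in>B. card (LS n S) ^ l) = (\<Sum>S\<in>B. (n - 1 + k)^l * card (LS (n-1) S) ^ l)"
    proof (rule sum.cong)
      fix S assume S: "S \<in> B"
      hence "n \<notin> S" "card S = k" unfolding B_def Iset_def by auto
      thus "card (LS n S) ^ l = (n - 1 + k)^l * card (LS (n-1) S) ^ l"
        using W_nonleader[OF n1, of S] by (simp add: power_mult_distrib)
    qed simp
    also have "\<dots> = (n - 1 + k)^l * Tn l r (n-1) k" unfolding Tn_def Beq by (simp add: sum_distrib_left)
    finally show ?thesis .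
  qed
  have Aeq: "A = insert n ` Iset r (n-1) (k-1)"
  proof
    show "insert n ` Iset r (n-1) (k-1) \<subseteq> A"
    proof
      fix S assume "S \<in> insert n ` Iset r (n-1) (k-1)"
      then obtain S' where S': "S' \<subseteq> {1..n-1}" "{1..r} \<subseteq> S'" "card S' = k-1" "S = insert n S'"
        unfolding Iset_def by auto
      have "n \<notin> S'" using S'(1) n1 by auto
      moreover have "finite S'" using S'(1) finite_subset by blast
      ultimately have "card S = k" using S' k1 by simp
      moreover have "S \<subseteq> {1..n}"
      proof -
        have "{1..n-1} \<subseteq> {1..n}" "n \<in> {1..n}" using n1 by auto
        thus ?thesis using S'(1,4) by blast
      qed
      ultimately show "S \<in> A" unfolding A_def Iset_def using S' by auto
    qed
    show "A \<subseteq> insert n ` Iset r (n-1) (k-1)"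
    proof
      fix S assume S: "S \<in> A"
      hence S1: "S \<subseteq> {1..n}" "{1..r} \<subseteq> S" "card S = k" "n \<in> S" unfolding A_def Iset_def by auto
      have "S - {n} \<subseteq> {1..n-1}" using S1(1) sub by blast
      moreover have "{1..r} \<subseteq> S - {n}" using S1(2) nr by auto
      moreover have "card (S - {n}) = k - 1" using S1(3,4) by simp
      ultimately have "S - {n} \<in> Iset r (n-1) (k-1)" unfolding Iset_def by simp
      moreover have "S = insert n (S - {n})" using S1(4) by blast
      ultimately show "S \<in> insert n ` Iset r (n-1) (k-1)" by blast
    qed
  qed
  have inj: "inj_on (insert n) (Iset r (n-1) (k-1))"
  proof (rule inj_onI)
    fix X Y assume "X \<in> Iset r (n-1) (k-1)" "Y \<in> Iset r (n-1) (k-1)" "insert n X = insert n Y"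
    moreover have "n \<notin> X" "n \<notin> Y" using calculation(1,2) n1 unfolding Iset_def by auto
    ultimately show "X = Y" by (metis Diff_insert_absorb)
  qed
  have Asum: "(\<Sum>S\<in>A. card (LS n S) ^ l) = Tn l r (n-1) (k-1)"
  proof -
    have "(\<Sum>S\<in>A. card (LS n S) ^ l) = (\<Sum>S'\<in>Iset r (n-1) (k-1). card (LS n (insert n S')) ^ l)"
      unfolding Aeq by (rule sum.reindex[OF inj, unfolded comp_def])
    also have "\<dots> = (\<Sum>S'\<in>Iset r (n-1) (k-1). card (LS (n-1) S') ^ l)"
    proof (rule sum.cong)
      fix S' assume "S' \<in> Iset r (n-1) (k-1)"
      hence "n \<notin> S'" using n1 unfolding Iset_def by auto
      thus "card (LS n (insert n S')) ^ l = card (LS (n-1) S') ^ l"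
        using W_leader[OF n1, of "insert n S'"] by simp
    qed simp
    finally show ?thesis unfolding Tn_def .
  qed
  show ?thesis using sumsplit Asum Bsum by simp
qed

lemma lah_Tn: "l \<ge> 1 \<Longrightarrow> k \<ge> 0 \<Longrightarrow> lah_lr l r n k = Tn l r n (nat k)"
  unfolding Tn_def Iset_def by (rule lah_lr_sum)



lemma key_step:
  fixes x0 x1 x2 x3 d1 d2 d3 d4 :: real
  assumes nn: "x0 \<ge> 0" "x1 \<ge> 0" "x2 \<ge> 0" "x3 \<ge> 0"
    and dp: "d1 > 0" "d2 > 0" "d3 > 0" "d4 > 0"
    and lc: "d1 * d4 \<le> d2 * d3"
    and Hm: "d2 * (x0 * x2) \<le> d1 * x1^2"
    and Hk: "d3 * (x1 * x3) \<le> d2 * x2^2"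
    and nz: "x1 * x2 = 0 \<Longrightarrow> x0 * x3 = 0"
  shows "d4 * ((x0 + d1 * x1) * (x2 + d3 * x3)) \<le> d3 * (x1 + d2 * x2)^2"
proof -
  have t1: "d4 * (x0 * x2) \<le> d3 * x1^2"
  proof -
    have "d2 * (d4 * (x0 * x2)) = d4 * (d2 * (x0 * x2))" by simp
    also have "\<dots> \<le> d4 * (d1 * x1^2)" using Hm dp by (intro mult_left_mono) auto
    also have "\<dots> = (d1 * d4) * x1^2" by simp
    also have "\<dots> \<le> (d2 * d3) * x1^2" using lc by (intro mult_right_mono) auto
    finally have "d2 * (d4 * (x0 * x2)) \<le> d2 * (d3 * x1^2)" by simp
    thus ?thesis using dp by simp
  qed
  have t2: "d4 * d1 * d3 * (x1 * x3) \<le> d3 * d2^2 * x2^2"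
  proof -
    have "d4 * d1 * d3 * (x1 * x3) = (d4 * d1) * (d3 * (x1 * x3))" by simp
    also have "\<dots> \<le> (d4 * d1) * (d2 * x2^2)" using Hk dp by (intro mult_left_mono) auto
    also have "\<dots> = (d1 * d4) * (d2 * x2^2)" by simp
    also have "\<dots> \<le> (d2 * d3) * (d2 * x2^2)" using lc dp nn by (intro mult_right_mono) auto
    finally show ?thesis by (simp add: power2_eq_square algebra_simps)
  qed
  have t4: "d4 * d1 * (x1 * x2) \<le> d2 * d3 * (x1 * x2)"
    using lc nn by (simp add: mult_right_mono mult.commute)
  have t3: "d3 * d4 * (x0 * x3) \<le> d2 * d3 * (x1 * x2)"
  proof (cases "x1 * x2 = 0")
    case True
    hence "x0 * x3 = 0" using nz by simp
    then show ?thesis unfolding True by (metis mult_zero_right order_refl)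
  next
    case False
    hence pos: "x1 * x2 > 0" using nn by (simp add: less_le)
    have "(d2 * (x0 * x2)) * (d3 * (x1 * x3)) \<le> (d1 * x1^2) * (d2 * x2^2)"
      by (rule mult_mono[OF Hm Hk]) (use nn dp in auto)
    hence "(d2 * (x1 * x2)) * (d3 * (x0 * x3)) \<le> (d2 * (x1 * x2)) * (d1 * (x1 * x2))"
      by (simp add: power2_eq_square algebra_simps)
    hence a: "d3 * (x0 * x3) \<le> d1 * (x1 * x2)" by (subst (asm) mult_le_cancel_left_pos) (use pos dp in auto)
    have "d3 * d4 * (x0 * x3) = d4 * (d3 * (x0 * x3))" by simp
    also have "\<dots> \<le> d4 * (d1 * (x1 * x2))" using a dp by (intro mult_left_mono) auto
    also have "\<dots> = (d1 * d4) * (x1 * x2)" by simp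
    also have "\<dots> \<le> (d2 * d3) * (x1 * x2)" using lc pos by (intro mult_right_mono) auto
    finally show ?thesis by simp
  qed
  have "d4 * ((x0 + d1 * x1) * (x2 + d3 * x3)) =
     d4 * (x0 * x2) + d3 * d4 * (x0 * x3) + d4 * d1 * (x1 * x2) + d4 * d1 * d3 * (x1 * x3)"
    by (simp add: algebra_simps)
  moreover have "d3 * (x1 + d2 * x2)^2 = d3 * x1^2 + 2 * (d2 * d3 * (x1 * x2)) + d3 * d2^2 * x2^2"
    by (simp add: power2_eq_square algebra_simps)
  ultimately show ?thesis using t1 t2 t3 t4 by linarith
qed

lemma tri_support:
  fixes t :: "nat \<Rightarrow> nat \<Rightarrow> real" and f :: "nat \<Rightarrow> real"
  assumes base: "\<And>k. t r k = (if k = r then 1 else 0)"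
    and rec: "\<And>n k. n > r \<Longrightarrow> k \<ge> 1 \<Longrightarrow> t n k = t (n-1) (k-1) + f (n-1+k) * t (n-1) k"
    and z0: "\<And>n. n \<ge> r \<Longrightarrow> t n 0 = 0"
    and fpos: "\<And>j. j \<ge> 1 \<Longrightarrow> f j > 0"
    and r1: "r \<ge> 1"
  shows "n \<ge> r \<Longrightarrow> (t n k > 0 \<longleftrightarrow> r \<le> k \<and> k \<le> n) \<and> t n k \<ge> 0"
proof (induction n arbitrary: k)
  case 0
  then show ?case using r1 by simp
next
  case (Suc m)
  show ?case
  proof (cases "Suc m = r")
    case True
    then show ?thesis using base[of k] by auto
  next
    case False
    hence mr: "m \<ge> r" using Suc.prems by simp
    show ?thesis
    proof (cases k)
      case 0
      then show ?thesis using z0[of "Suc m"] Suc.prems r1 by auto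
    next
      case (Suc j)
      have e: "t (Suc m) k = t m j + f (m + k) * t m k"
        using rec[of "Suc m" k] Suc.prems False Suc by simp
      have fp: "f (m + k) > 0" using fpos Suc by simp
      have h1: "(t m j > 0 \<longleftrightarrow> r \<le> j \<and> j \<le> m) \<and> t m j \<ge> 0" using Suc.IH mr by blast
      have h2: "(t m k > 0 \<longleftrightarrow> r \<le> k \<and> k \<le> m) \<and> t m k \<ge> 0" using Suc.IH mr by blast
      have nn: "f (m + k) * t m k \<ge> 0" using fp h2 by simp
      have pp: "f (m + k) * t m k > 0 \<longleftrightarrow> t m k > 0" using fp h2 by (simp add: zero_less_mult_iff)
      show ?thesis unfolding e using h1 h2 nn pp Suc mr by auto
    qed
  qed
qed

lemma tri_P:
  fixes t :: "nat \<Rightarrow> nat \<Rightarrow> real" and f :: "nat \<Rightarrow> real"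
  assumes base: "\<And>k. t r k = (if k = r then 1 else 0)"
    and rec: "\<And>n k. n > r \<Longrightarrow> k \<ge> 1 \<Longrightarrow> t n k = t (n-1) (k-1) + f (n-1+k) * t (n-1) k"
    and z0: "\<And>n. n \<ge> r \<Longrightarrow> t n 0 = 0"
    and fpos: "\<And>j. j \<ge> 1 \<Longrightarrow> f j > 0"
    and flc: "\<And>a. f a * f (a+3) \<le> f (a+1) * f (a+2)"
    and r1: "r \<ge> 1"
  shows "n \<ge> r \<Longrightarrow> k \<ge> 1 \<Longrightarrow> f (n+k+1) * (t n (k-1) * t n (k+1)) \<le> f (n+k) * (t n k)^2"
proof (induction n arbitrary: k)
  case 0
  then show ?case using r1 by simp
next
  case (Suc m)
  note sup = tri_support[of t r f, OF base rec z0 fpos r1]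
  show ?case
  proof (cases "Suc m = r")
    case True
    have "t (Suc m) (k-1) * t (Suc m) (k+1) = 0" using base True by auto
    moreover have "f (Suc m + k) * (t (Suc m) k)^2 \<ge> 0" using fpos[of "Suc m + k"] by simp
    ultimately show ?thesis by (metis mult_zero_right)
  next
    case False
    hence mr: "m \<ge> r" using Suc.prems by simp
    show ?thesis
    proof (cases "k \<ge> 2")
      case False
      hence "k = 1" using Suc.prems by simp
      hence "t (Suc m) (k-1) = 0" using z0[of "Suc m"] Suc.prems by simp
      moreover have "f (Suc m + k) * (t (Suc m) k)^2 \<ge> 0" using fpos[of "Suc m + k"] by simp
      ultimately show ?thesis by simp
    next
      case True
      then obtain j where kj: "k = Suc (Suc j)" by (metis add_2_eq_Suc le_Suc_ex)
      have m1: "m \<ge> 1" using mr r1 by simp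
      define x0 where "x0 = t m j"
      define x1 where "x1 = t m (Suc j)"
      define x2 where "x2 = t m (Suc (Suc j))"
      define x3 where "x3 = t m (Suc (Suc (Suc j)))"
      define d1 where "d1 = f (m + Suc j)"
      define d2 where "d2 = f (m + Suc (Suc j))"
      define d3 where "d3 = f (Suc m + Suc (Suc j))"
      define d4 where "d4 = f (Suc m + Suc (Suc j) + 1)"
      have yk: "t (Suc m) k = x1 + d2 * x2"
        using rec[of "Suc m" k] False Suc.prems kj by (simp add: x0_def x1_def x2_def x3_def d2_def)
      have yk1: "t (Suc m) (k-1) = x0 + d1 * x1"
        using rec[of "Suc m" "k-1"] False Suc.prems kj by (simp add: x0_def x1_def x2_def x3_def d1_def)
      have yk2: "t (Suc m) (k+1) = x2 + d3 * x3"
        using rec[of "Suc m" "k+1"] False Suc.prems kj by (simp add: x0_def x1_def x2_def x3_def d3_def)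
      have Hm: "d2 * (x0 * x2) \<le> d1 * x1^2"
        using Suc.IH[of "Suc j"] mr by (simp add: x0_def x1_def x2_def x3_def d1_def d2_def)
      have Hk: "d3 * (x1 * x3) \<le> d2 * x2^2"
        using Suc.IH[of "Suc (Suc j)"] mr by (simp add: x0_def x1_def x2_def x3_def d3_def d2_def)
      have lc: "d1 * d4 \<le> d2 * d3"
        using flc[of "m + Suc j"] unfolding d1_def d2_def d3_def d4_def
        by (simp add: numeral_eq_Suc add.commute add.left_commute)
      have dp: "d1 > 0" "d2 > 0" "d3 > 0" "d4 > 0" using fpos m1 by (auto simp: d1_def d2_def d3_def d4_def)
      have nn: "x0 \<ge> 0" "x1 \<ge> 0" "x2 \<ge> 0" "x3 \<ge> 0" using sup mr by (auto simp: x0_def x1_def x2_def x3_def)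
      have nz: "x0 * x3 = 0" if "x1 * x2 = 0"
      proof -
        have "x1 = 0 \<or> x2 = 0" using that by simp
        hence "\<not> (r \<le> Suc j \<and> Suc (Suc j) \<le> m)" using sup[of m "Suc j"] sup[of m "Suc (Suc j)"] mr
          by (auto simp: x1_def x2_def)
        hence "\<not> (r \<le> j) \<or> \<not> (Suc (Suc (Suc j)) \<le> m)" by auto
        hence "x0 = 0 \<or> x3 = 0" using sup[of m j] sup[of m "Suc (Suc (Suc j))"] mr
          by (auto simp: x0_def x3_def)
        thus ?thesis by auto
      qed
      have "d4 * ((x0 + d1 * x1) * (x2 + d3 * x3)) \<le> d3 * (x1 + d2 * x2)^2"
        by (rule key_step[OF nn dp lc Hm Hk nz])
      then show ?thesis unfolding yk yk1 yk2 using kj by (simp add: d3_def d4_def)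
    qed
  qed
qed


theorem mainTheorem8:
  fixes l r n :: nat and k :: int
  assumes "l \<ge> 1" and "r \<ge> 1" and "n \<ge> r"
  shows "(lah_lr l r n k)^2 \<ge> lah_lr l r n (k - 1) * lah_lr l r n (k + 1)"
proof (cases "k \<ge> 1")
  case False
  hence "lah_lr l r n (k - 1) = 0" unfolding lah_lr_def by simp
  thus ?thesis by simp
next
  case True
  define K where "K = nat k"
  have K1: "K \<ge> 1" using True K_def by simp
  have e0: "lah_lr l r n k = Tn l r n K" using lah_Tn[OF assms(1)] True K_def by simp
  have e1: "lah_lr l r n (k - 1) = Tn l r n (K - 1)"
    using lah_Tn[OF assms(1), of "k - 1"] True K_def by (simp add: nat_diff_distrib)
  have e2: "lah_lr l r n (k + 1) = Tn l r n (K + 1)"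
    using lah_Tn[OF assms(1), of "k + 1"] True K_def by (simp add: nat_add_distrib)
  define t where "t = (\<lambda>m j. real (Tn l r m j))"
  define f where "f = (\<lambda>j::nat. real j ^ l)"
  have base: "\<And>j. t r j = (if j = r then 1 else 0)" unfolding t_def using Tn_base by simp
  have rec: "\<And>m j. m > r \<Longrightarrow> j \<ge> 1 \<Longrightarrow> t m j = t (m-1) (j-1) + f (m-1+j) * t (m-1) j"
    unfolding t_def f_def using Tn_rec by simp
  have z0: "\<And>m. m \<ge> r \<Longrightarrow> t m 0 = 0" unfolding t_def using Tn_zero[OF assms(2)] by simp
  have fpos: "\<And>j. j \<ge> 1 \<Longrightarrow> f j > 0" unfolding f_def by simp
  have flc: "\<And>a. f a * f (a+3) \<le> f (a+1) * f (a+2)"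
  proof -
    fix a :: nat
    have "real a * real (a+3) \<le> real (a+1) * real (a+2)" by (simp add: algebra_simps)
    hence "(real a * real (a+3))^l \<le> (real (a+1) * real (a+2))^l"
      by (intro power_mono) auto
    thus "f a * f (a+3) \<le> f (a+1) * f (a+2)" unfolding f_def by (simp add: power_mult_distrib)
  qed
  have P: "f (n+K+1) * (t n (K-1) * t n (K+1)) \<le> f (n+K) * (t n K)^2"
    by (rule tri_P[of t r f, OF base rec z0 fpos flc assms(2) assms(3) K1])
  have fm: "f (n+K) \<le> f (n+K+1)" unfolding f_def by (intro power_mono) auto
  have fp: "f (n+K) > 0" using fpos K1 by simp
  have nn: "t n (K-1) * t n (K+1) \<ge> 0" unfolding t_def by simp
  have "f (n+K) * (t n (K-1) * t n (K+1)) \<le> f (n+K+1) * (t n (K-1) * t n (K+1))"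
    using fm nn by (rule mult_right_mono)
  also note P
  finally have "t n (K-1) * t n (K+1) \<le> (t n K)^2" using fp by simp
  hence "real (Tn l r n (K-1) * Tn l r n (K+1)) \<le> real ((Tn l r n K)^2)" unfolding t_def by simp
  hence "Tn l r n (K-1) * Tn l r n (K+1) \<le> (Tn l r n K)^2" by (simp only: of_nat_le_iff)
  thus ?thesis using e0 e1 e2 by simp
qed

end
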